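(* There is a choice of the sample size $\ell=O(\log n)$ such that, for any weighted stream of $n$ updates, the Reduce-By-Sample-Median algorithm (defined in the context) with $k$ counters and sample size $\ell$ can be implemented to run in amortized constant time per stream update with probability at least $1-1/n$ (over the algorithm's random sampling), assuming counters are stored in a hash table supporting insertions, deletions and lookups in amortized $O(1)$ time and enumeration of all counters in $O(k)$ time.
   Context: A weighted stream over the universe $[m]=\{1,\dots,m\}$ is a sequence of updates $(i_1,\Delta_1),\dots,(i_n,\Delta_n)$ with $i_t\in[m]$ and real weights $\Delta_t>0$. The Reduce-By-Sample-Median algorithm with parameters $k\ge 1$ (number of counters) and $\ell\ge 1$ (sample size) maintains a set $T\subseteq[m]$ of at most $k$ items, each $j\in T$ carrying a nonnegative real counter $c(j)$; initially $T=\emptyset$. Update$(i,\Delta)$: if $i\in T$, set $c(i)\gets c(i)+\Delta$; else if $|T|<k$, add $i$ to $T$ with $c(i)=\Delta$; else call DecrementCounters(), and afterwards, if $\Delta\ge c^*$, add $i$ to $T$ with $c(i)=\Delta-c^*$. DecrementCounters(): sample $\ell$ counters uniformly at random from $T$ (fresh randomness in each call) and let $c^*$ be the median of the sampled counter values; for every $j\in T$ set $c(j)\gets c(j)-c^*$, and remove $j$ from $T$ if now $c(j)\le 0$. Estimate$(i)$ returns $c(i)$ if $i\in T$ and $0$ otherwise. *)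

theory Defs
  imports "HOL-Probability.Probability"
begin

text \<open>State of Reduce-By-Sample-Median: the set T of tracked items and the counters c.
  Counter values outside T are irrelevant.\<close>
type_synonym rbsm_state = "nat set \<times> (nat \<Rightarrow> real)"

text \<open>Median of a (nonempty) list of sampled values: the element of rank
  (length div 2) (0-indexed) of the sorted list; the true median when the length is odd.\<close>
definition median :: "real list \<Rightarrow> real" where
  "median xs = sort xs ! (length xs div 2)"

fun sample_list :: "nat \<Rightarrow> 'a set \<Rightarrow> 'a list pmf" where
  "sample_list 0 A = return_pmf []"
| "sample_list (Suc n) A =
     bind_pmf (pmf_of_set A) (\<lambda>x. map_pmf (\<lambda>xs. x # xs) (sample_list n A))"

definition decrement :: "nat \<Rightarrow> rbsm_state \<Rightarrow> (rbsm_state \<times> real) pmf" where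
  "decrement l s = (case s of (T, c) \<Rightarrow>
     map_pmf (\<lambda>js. let cs = median (map c js)
                   in (({j \<in> T. c j - cs > 0}, (\<lambda>j. c j - cs)), cs))
             (sample_list l T))"

text \<open>Update(i,Delta) with k counters and sample size l; returns the new state together
  with the cost of the step in the stated cost model: hash-table operations cost 1,
  a call to DecrementCounters costs |T| (enumerating all counters) plus l
  (drawing the sample and selecting its median).\<close>
definition update :: "nat \<Rightarrow> nat \<Rightarrow> nat \<times> real \<Rightarrow> rbsm_state \<Rightarrow> (rbsm_state \<times> nat) pmf" where
  "update k l u s = (case u of (i, \<Delta>) \<Rightarrow> case s of (T, c) \<Rightarrow>
     if i \<in> T then return_pmf ((T, c(i := c i + \<Delta>)), 1)
     else if card T < k then return_pmf ((insert i T, c(i := \<Delta>)), 1)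
     else map_pmf (\<lambda>((T', c'), cs).
              (if \<Delta> \<ge> cs then (insert i T', c'(i := \<Delta> - cs)) else (T', c'),
               1 + card T + l))
            (decrement l (T, c)))"

fun run :: "nat \<Rightarrow> nat \<Rightarrow> (nat \<times> real) list \<Rightarrow> rbsm_state \<Rightarrow> (rbsm_state \<times> nat) pmf" where
  "run k l [] s = return_pmf (s, 0)"
| "run k l (u # us) s =
     bind_pmf (update k l u s) (\<lambda>(s1, c1).
       map_pmf (\<lambda>(s2, c2). (s2, c1 + c2)) (run k l us s1))"

definition total_cost :: "nat \<Rightarrow> nat \<Rightarrow> (nat \<times> real) list \<Rightarrow> nat pmf" where
  "total_cost k l xs = map_pmf snd (run k l xs ({}, (\<lambda>_. 0)))"

end

theory Submission
  imports Defs
begin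

lemma E_mono:
  fixes f g :: "'a \<Rightarrow> real"
  assumes "finite (set_pmf p)" "\<And>x. x \<in> set_pmf p \<Longrightarrow> f x \<le> g x"
  shows "measure_pmf.expectation p f \<le> measure_pmf.expectation p g"
  using assms by (intro integral_mono_AE integrable_measure_pmf_finite) (auto simp: AE_measure_pmf_iff)

lemma E_bind_le:
  fixes h :: "'b \<Rightarrow> real" and g :: "'a \<Rightarrow> real"
  assumes fin: "finite (set_pmf p)" and fin2: "\<And>x. x \<in> set_pmf p \<Longrightarrow> finite (set_pmf (f x))"
    and le: "\<And>x. x \<in> set_pmf p \<Longrightarrow> measure_pmf.expectation (f x) h \<le> g x"
  shows "measure_pmf.expectation (bind_pmf p f) h \<le> measure_pmf.expectation p g"
proof -
  have "measure_pmf.expectation (bind_pmf p f) h = (\<Sum>a\<in>set_pmf p. pmf p a *\<^sub>R measure_pmf.expectation (f a) h)"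
    using fin fin2 by (intro pmf_expectation_bind) auto
  also have "\<dots> \<le> (\<Sum>a\<in>set_pmf p. pmf p a *\<^sub>R g a)"
    using le by (intro sum_mono) (auto intro: mult_left_mono)
  also have "\<dots> = measure_pmf.expectation p g"
    using fin by (subst integral_measure_pmf[of "set_pmf p"]) auto
  finally show ?thesis .
qed

lemma sample_support:
  assumes "finite T" "T \<noteq> {}"
  shows "js \<in> set_pmf (sample_list l T) \<Longrightarrow> length js = l \<and> set js \<subseteq> T"
proof (induction l arbitrary: js)
  case 0 then show ?case by simp
next
  case (Suc l)
  from Suc.prems obtain x ys where "x \<in> T" "ys \<in> set_pmf (sample_list l T)" "js = x # ys"
    using assms by auto
  then show ?case using Suc.IH by auto
qed

lemma sample_finite:
  assumes "finite T" "T \<noteq> {}"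
  shows "finite (set_pmf (sample_list l T))"
proof -
  have "set_pmf (sample_list l T) \<subseteq> {js. set js \<subseteq> T \<and> length js = l}"
    using sample_support[OF assms] by auto
  moreover have "finite {js. set js \<subseteq> T \<and> length js = l}"
    using assms(1) by (rule finite_lists_length_eq)
  ultimately show ?thesis by (rule finite_subset)
qed

lemma sum_if_count:
  assumes "finite T" "L \<subseteq> T"
  shows "(\<Sum>a\<in>T. (if a \<in> L then 4 else 1 :: real)) = real (card T) + 3 * real (card L)"
proof -
  have "(\<Sum>a\<in>T. (if a \<in> L then 4 else 1 :: real)) = (\<Sum>a\<in>T. 1 + 3 * (if a \<in> L then 1 else 0))"
    by (intro sum.cong) auto
  also have "\<dots> = real (card T) + 3 * (\<Sum>a\<in>T. (if a \<in> L then 1 else 0))"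
    by (simp add: sum.distrib sum_distrib_left)
  also have "(\<Sum>a\<in>T. (if a \<in> L then 1 else 0 :: real)) = real (card L)"
    using assms by (subst sum.If_cases) (auto simp: Int_absorb1)
  finally show ?thesis .
qed

lemma sample_moment:
  assumes fin: "finite T" and ne: "T \<noteq> {}" and LT: "L \<subseteq> T"
  shows "measure_pmf.expectation (sample_list l T) (\<lambda>js. (4::real) ^ length (filter (\<lambda>j. j \<in> L) js))
         = (1 + 3 * real (card L) / real (card T)) ^ l"
proof (induction l)
  case 0
  then show ?case by simp
next
  case (Suc n)
  let ?h = "\<lambda>js. (4::real) ^ length (filter (\<lambda>j. j \<in> L) js)"
  let ?X = "measure_pmf.expectation (sample_list n T) ?h"
  have "measure_pmf.expectation (sample_list (Suc n) T) ?h =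
     (\<Sum>a\<in>T. pmf (pmf_of_set T) a *\<^sub>R measure_pmf.expectation (map_pmf (\<lambda>xs. a # xs) (sample_list n T)) ?h)"
    using fin ne by (simp only: sample_list.simps, intro pmf_expectation_bind) (auto simp: sample_finite)
  also have "\<dots> = (\<Sum>a\<in>T. (1 / real (card T)) * ((if a \<in> L then 4 else 1) * ?X))"
  proof (intro sum.cong refl)
    fix a assume "a \<in> T"
    have "measure_pmf.expectation (map_pmf (\<lambda>xs. a # xs) (sample_list n T)) ?h
       = measure_pmf.expectation (sample_list n T) (\<lambda>js. (if a \<in> L then 4 else 1) * ?h js)"
      by (simp add: power_Suc)
    also have "\<dots> = (if a \<in> L then 4 else 1) * ?X" by simp
    finally show "pmf (pmf_of_set T) a *\<^sub>R measure_pmf.expectation (map_pmf (\<lambda>xs. a # xs) (sample_list n T)) ?h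
       = (1 / real (card T)) * ((if a \<in> L then 4 else 1) * ?X)"
      using \<open>a \<in> T\<close> fin ne by simp
  qed
  also have "\<dots> = (1 / real (card T)) * ?X * (\<Sum>a\<in>T. (if a \<in> L then 4 else 1))"
    by (simp add: sum_distrib_left sum_distrib_right sum_divide_distrib mult_ac)
  also have "\<dots> = ?X * (1 + 3 * real (card L) / real (card T))"
    using fin ne LT by (simp add: sum_if_count field_simps)
  finally show ?case using Suc by simp
qed

lemma pmf_markov:
  fixes u :: "'a \<Rightarrow> real"
  assumes fin: "finite (set_pmf p)" and nn: "\<And>x. x \<in> set_pmf p \<Longrightarrow> 0 \<le> u x"
    and sub: "\<And>x. x \<in> set_pmf p \<Longrightarrow> x \<in> A \<Longrightarrow> t \<le> u x" and t: "0 < t"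
  shows "measure_pmf.prob p A \<le> measure_pmf.expectation p u / t"
proof -
  have "measure_pmf.prob p A = measure_pmf.prob p (A \<inter> set_pmf p)"
    by (simp add: measure_Int_set_pmf)
  also have "\<dots> \<le> measure_pmf.prob p {x \<in> space (measure_pmf p). u x \<ge> t}"
    using sub by (intro measure_pmf.finite_measure_mono) auto
  also have "\<dots> \<le> measure_pmf.expectation p u / t"
    using nn t by (intro integral_Markov_inequality_measure[where A=UNIV] integrable_measure_pmf_finite fin)
      (auto simp: AE_measure_pmf_iff)
  finally show ?thesis .
qed

lemma filter_len_mono:
  "(\<And>x. x \<in> set xs \<Longrightarrow> P x \<Longrightarrow> Q x) \<Longrightarrow> length (filter P xs) \<le> length (filter Q xs)"
  by (induction xs) auto

lemma sorted_filter_nth: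
  fixes ys :: "real list"
  assumes "sorted ys" "i < length ys"
  shows "Suc i \<le> length (filter (\<lambda>x. x \<le> ys ! i) ys)"
proof -
  have "length (filter (\<lambda>x. x \<le> ys ! i) (take (Suc i) ys)) = Suc i"
  proof -
    have "\<forall>x\<in>set (take (Suc i) ys). x \<le> ys ! i"
      using assms by (auto simp: in_set_conv_nth sorted_nth_mono)
    then have "filter (\<lambda>x. x \<le> ys ! i) (take (Suc i) ys) = take (Suc i) ys"
      by (simp add: filter_id_conv)
    then show ?thesis using assms by simp
  qed
  moreover have "length (filter (\<lambda>x. x \<le> ys ! i) (take (Suc i) ys)) \<le> length (filter (\<lambda>x. x \<le> ys ! i) ys)"
    by (metis append_take_drop_id filter_append length_append le_add1)
  ultimately show ?thesis by simp
qed

lemma median_count: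
  fixes xs :: "real list"
  assumes "xs \<noteq> []"
  shows "Suc (length xs div 2) \<le> length (filter (\<lambda>x. x \<le> median xs) xs)"
proof -
  have "Suc (length xs div 2) \<le> length (filter (\<lambda>x. x \<le> median xs) (sort xs))"
    unfolding median_def using assms by (intro sorted_filter_nth) auto
  also have "length (filter (\<lambda>x. x \<le> median xs) (sort xs)) = length (filter (\<lambda>x. x \<le> median xs) xs)"
    by (metis mset_filter mset_sort size_mset)
  finally show ?thesis .
qed

lemma median_tail:
  fixes c :: "nat \<Rightarrow> real"
  assumes fin: "finite T" and ne: "T \<noteq> {}" and l: "1 \<le> l"
  shows "measure_pmf.prob (sample_list l T) {js. 4 * card {j \<in> T. c j \<le> median (map c js)} < card T}
          \<le> (7/8) ^ l"
proof -
  define k where "k = card T"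
  define L0 where "L0 = {j \<in> T. 4 * card {i \<in> T. c i \<le> c j} < k}"
  have L0T: "L0 \<subseteq> T" unfolding L0_def by auto
  have kpos: "0 < k" using fin ne k_def by (simp add: card_gt_0_iff)
  have cardL0: "4 * card L0 \<le> k"
  proof (cases "L0 = {}")
    case True then show ?thesis by simp
  next
    case False
    have finL0: "finite L0" using L0T fin finite_subset by blast
    obtain j where j: "j \<in> L0" "c j = Max (c ` L0)"
      using False finL0 by (metis (mono_tags, lifting) Max_in finite_imageI image_iff image_is_empty)
    have "L0 \<subseteq> {i \<in> T. c i \<le> c j}"
      using j finL0 L0T by auto
    then have "card L0 \<le> card {i \<in> T. c i \<le> c j}" using fin by (intro card_mono) auto
    moreover have "4 * card {i \<in> T. c i \<le> c j} < k" using j(1) unfolding L0_def by auto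
    ultimately show ?thesis by linarith
  qed
  define cnt where "cnt = (\<lambda>js. length (filter (\<lambda>j. j \<in> L0) js))"
  have key: "Suc (l div 2) \<le> cnt js"
    if js: "js \<in> set_pmf (sample_list l T)" and bad: "4 * card {j \<in> T. c j \<le> median (map c js)} < card T" for js
  proof -
    let ?cs = "median (map c js)"
    have len: "length js = l" and sub: "set js \<subseteq> T" using sample_support[OF fin ne js] by auto
    have "Suc (l div 2) \<le> length (filter (\<lambda>x. x \<le> ?cs) (map c js))"
      using median_count[of "map c js"] len l by (cases js) auto
    also have "\<dots> = length (filter (\<lambda>j. c j \<le> ?cs) js)"
      by (simp add: filter_map comp_def)
    also have "\<dots> \<le> cnt js"
      unfolding cnt_def
    proof (rule filter_len_mono)
      fix j assume "j \<in> set js" "c j \<le> ?cs"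
      then have jT: "j \<in> T" using sub by auto
      have "{i \<in> T. c i \<le> c j} \<subseteq> {i \<in> T. c i \<le> ?cs}" using \<open>c j \<le> ?cs\<close> by auto
      then have "card {i \<in> T. c i \<le> c j} \<le> card {i \<in> T. c i \<le> ?cs}" using fin by (intro card_mono) auto
      then show "j \<in> L0" using jT bad unfolding L0_def k_def by auto
    qed
    finally show ?thesis .
  qed
  have "measure_pmf.prob (sample_list l T) {js. 4 * card {j \<in> T. c j \<le> median (map c js)} < card T}
      \<le> measure_pmf.expectation (sample_list l T) (\<lambda>js. (4::real) ^ cnt js) / 4 ^ Suc (l div 2)"
  proof (intro pmf_markov sample_finite fin ne)
    fix js assume "js \<in> set_pmf (sample_list l T)" "js \<in> {js. 4 * card {j \<in> T. c j \<le> median (map c js)} < card T}"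
    then have "Suc (l div 2) \<le> cnt js" using key by auto
    then show "(4::real) ^ Suc (l div 2) \<le> 4 ^ cnt js" by (intro power_increasing) auto
  qed auto
  also have "measure_pmf.expectation (sample_list l T) (\<lambda>js. (4::real) ^ cnt js) = (1 + 3 * real (card L0) / real k) ^ l"
    unfolding cnt_def k_def by (rule sample_moment[OF fin ne L0T])
  also have "(1 + 3 * real (card L0) / real k) ^ l \<le> (7/4) ^ l"
  proof (rule power_mono)
    have "real (card L0) / real k \<le> 1/4" using cardL0 kpos by (simp add: field_simps)
    then show "1 + 3 * real (card L0) / real k \<le> 7/4" by simp
  qed simp
  also have "(2::real) ^ l \<le> 4 ^ Suc (l div 2)"
  proof -
    have "(2::real) ^ l \<le> 2 ^ (2 * Suc (l div 2))" by (intro power_increasing) auto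
    also have "\<dots> = 4 ^ Suc (l div 2)" by (simp add: power_mult)
    finally show ?thesis .
  qed
  then have "(7/4) ^ l / 4 ^ Suc (l div 2) \<le> ((7/4::real) ^ l) / 2 ^ l"
    by (intro divide_left_mono) auto
  also have "\<dots> = (7/8) ^ l" by (simp add: power_divide[symmetric])
  finally show ?thesis by (simp add: divide_right_mono)
qed

lemma median_in: "xs \<noteq> [] \<Longrightarrow> median xs \<in> set xs"
  unfolding median_def by (metis length_greater_0_conv length_sort div_less_dividend nth_mem one_less_numeral_iff semiring_norm(76) set_sort)

lemma dec_expect:
  fixes c :: "nat \<Rightarrow> real" and f :: "rbsm_state \<Rightarrow> real \<Rightarrow> real"
  shows "measure_pmf.expectation (decrement l (T, c))
     (\<lambda>((T', c'), cs). f (T', c') cs) =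
     measure_pmf.expectation (sample_list l T) (\<lambda>js. f ({j \<in> T. c j - median (map c js) > 0}, (\<lambda>j. c j - median (map c js))) (median (map c js)))"
  unfolding decrement_def by (simp add: Let_def)

lemma update_step:
  fixes c :: "nat \<Rightarrow> real" and lam a :: real
  assumes fin: "finite T" and cardk: "card T \<le> k" and l1: "1 \<le> l" and lk: "l \<le> k"
    and lam: "0 \<le> lam" and a: "9 \<le> a"
    and H: "card T = k \<Longrightarrow> exp (lam * 9) + (7/8) ^ l * exp (lam * (9 + real k + real l)) \<le> exp (lam * a)"
  shows "measure_pmf.expectation (update k l (i, \<Delta>) (T, c))
           (\<lambda>((T1, c1), t). exp (lam * (real t + 8 * real (card T1)))) \<le> exp (lam * (a + 8 * real (card T)))"
proof (cases "i \<in> T")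
  case True
  then show ?thesis using lam a unfolding update_def by (simp add: mult_left_mono)
next
  case False
  show ?thesis
  proof (cases "card T < k")
    case True
    then show ?thesis using lam a False fin unfolding update_def by (simp add: mult_left_mono)
  next
    case False2: False
    have kT: "card T = k" using False2 cardk by simp
    have ne: "T \<noteq> {}" using kT l1 lk by auto
    define cs where "cs = (\<lambda>js. median (map c js))"
    define T' where "T' = (\<lambda>js. {j \<in> T. c j - cs js > 0})"
    define g where "g = (\<lambda>js. exp (lam * (real (1 + card T + l) + 8 * real (card (if \<Delta> \<ge> cs js then insert i (T' js) else T' js)))))"
    have "measure_pmf.expectation (update k l (i, \<Delta>) (T, c))
           (\<lambda>((T1, c1), t). exp (lam * (real t + 8 * real (card T1)))) = measure_pmf.expectation (sample_list l T) g"
      using False False2 unfolding update_def decrement_def g_def T'_def cs_def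
      by (simp add: Let_def, intro Bochner_Integration.integral_cong refl) (auto simp: algebra_simps)
    define bad where "bad = {js. 4 * card {j \<in> T. c j \<le> median (map c js)} < card T}"
    define B where "B = (\<lambda>js. exp (lam * 8 * real k) * (exp (lam * 9) + indicator bad js * exp (lam * (9 + real k + real l))))"
    have finS: "finite (set_pmf (sample_list l T))" using fin ne by (rule sample_finite)
    have pt: "g js \<le> B js" if js: "js \<in> set_pmf (sample_list l T)" for js
    proof -
      define R where "R = card {j \<in> T. c j \<le> cs js}"
      have part: "T' js \<union> {j \<in> T. c j \<le> cs js} = T" "T' js \<inter> {j \<in> T. c j \<le> cs js} = {}"
        unfolding T'_def by auto
      have "card (T' js) + R = k"
        using part fin kT unfolding R_def by (metis card_Un_disjoint finite_Un)
      moreover have "card (if \<Delta> \<ge> cs js then insert i (T' js) else T' js) \<le> card (T' js) + 1"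
        using fin unfolding T'_def by (auto intro: card_insert_le_m1 simp: card_insert_if)
      ultimately have C1: "real (card (if \<Delta> \<ge> cs js then insert i (T' js) else T' js)) \<le> real k - real R + 1"
        by linarith
      show ?thesis
      proof (cases "js \<in> bad")
        case True
        have "g js \<le> exp (lam * (real (1 + card T + l) + 8 * (real k - real R + 1)))"
          unfolding g_def using C1 lam by (auto intro!: mult_left_mono)
        also have "\<dots> \<le> exp (lam * 8 * real k) * exp (lam * (9 + real k + real l))"
          unfolding exp_add[symmetric] using lam kT by (auto simp: algebra_simps intro!: mult_left_mono)
        also have "\<dots> \<le> B js" unfolding B_def using True by simp
        finally show ?thesis .
      next
        case False
        then have "k \<le> 4 * R" unfolding bad_def R_def cs_def kT by auto
        have "g js \<le> exp (lam * (real (1 + card T + l) + 8 * (real k - real R + 1)))"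
          unfolding g_def using C1 lam by (auto intro!: mult_left_mono)
        also have "\<dots> \<le> exp (lam * 8 * real k) * exp (lam * 9)"
        proof -
          have "real l + real k \<le> 8 * real R" using lk \<open>k \<le> 4 * R\<close> by linarith
          then have "lam * (real l + real k) \<le> lam * (8 * real R)" using lam by (rule mult_left_mono)
          then show ?thesis unfolding exp_add[symmetric] using kT by (simp add: algebra_simps)
        qed
        also have "\<dots> \<le> B js" unfolding B_def using False by simp
        finally show ?thesis .
      qed
    qed
    have "measure_pmf.expectation (sample_list l T) g \<le> measure_pmf.expectation (sample_list l T) B"
      using finS pt by (rule E_mono)
    also have "\<dots> = exp (lam * 8 * real k) * (exp (lam * 9) + measure_pmf.prob (sample_list l T) bad * exp (lam * (9 + real k + real l)))"
      unfolding B_def using finS by (simp add: integrable_measure_pmf_finite)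
    also have "\<dots> \<le> exp (lam * 8 * real k) * (exp (lam * 9) + (7/8) ^ l * exp (lam * (9 + real k + real l)))"
      using median_tail[OF fin ne l1, of c] unfolding bad_def by (auto intro!: mult_left_mono mult_right_mono)
    also have "\<dots> \<le> exp (lam * 8 * real k) * exp (lam * a)"
      using H[OF kT] by (auto intro!: mult_left_mono)
    also have "\<dots> = exp (lam * (a + 8 * real (card T)))"
      unfolding exp_add[symmetric] kT by (simp add: algebra_simps)
    finally show ?thesis using \<open>measure_pmf.expectation _ _ = measure_pmf.expectation (sample_list l T) g\<close> by simp
  qed
qed

lemma update_support:
  fixes c :: "nat \<Rightarrow> real"
  assumes fin: "finite T" and cardk: "card T \<le> k" and k1: "1 \<le> k" and l1: "1 \<le> l"
  shows "finite (set_pmf (update k l (i, \<Delta>) (T, c)))"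
    and "((T1, c1), t) \<in> set_pmf (update k l (i, \<Delta>) (T, c)) \<Longrightarrow> finite T1 \<and> card T1 \<le> k \<and> card T1 \<le> card T + 1"
proof -
  have "finite (set_pmf (update k l (i, \<Delta>) (T, c))) \<and>
    (((T1, c1), t) \<in> set_pmf (update k l (i, \<Delta>) (T, c)) \<longrightarrow> finite T1 \<and> card T1 \<le> k \<and> card T1 \<le> card T + 1)"
  proof (cases "i \<in> T")
    case True
    then show ?thesis using fin cardk unfolding update_def by auto
  next
    case False
    show ?thesis
    proof (cases "card T < k")
      case True
      then show ?thesis using False fin unfolding update_def by auto
    next
      case False2: False
      have kT: "card T = k" using False2 cardk by simp
      have ne: "T \<noteq> {}" using kT k1 by auto
      have finS: "finite (set_pmf (sample_list l T))" using fin ne by (rule sample_finite)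
      have "finite (set_pmf (update k l (i, \<Delta>) (T, c)))"
        using False False2 finS unfolding update_def decrement_def by simp
      moreover have "finite T1 \<and> card T1 \<le> k \<and> card T1 \<le> card T + 1"
        if mem: "((T1, c1), t) \<in> set_pmf (update k l (i, \<Delta>) (T, c))"
      proof -
        from mem obtain js where js: "js \<in> set_pmf (sample_list l T)" and
          T1: "T1 = (if \<Delta> \<ge> median (map c js) then insert i {j \<in> T. c j - median (map c js) > 0}
                     else {j \<in> T. c j - median (map c js) > 0})"
          using False False2 unfolding update_def decrement_def by (auto simp: Let_def split: if_splits)
        have len: "length js = l" and sub: "set js \<subseteq> T" using sample_support[OF fin ne js] by auto
        have "median (map c js) \<in> set (map c js)" using len l1 by (intro median_in) auto
        then obtain j0 where j0: "j0 \<in> set js" "c j0 = median (map c js)" by auto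
        have sub2: "{j \<in> T. c j - median (map c js) > 0} \<subseteq> T - {j0}" using j0 by auto
        have "card {j \<in> T. c j - median (map c js) > 0} \<le> card (T - {j0})"
          using fin by (intro card_mono[OF _ sub2]) auto
        also have "\<dots> = k - 1" using j0 sub kT fin by auto
        finally have A: "card {j \<in> T. c j - median (map c js) > 0} \<le> k - 1" .
        have "card T1 \<le> card {j \<in> T. c j - median (map c js) > 0} + 1"
          unfolding T1 using fin by (auto simp: card_insert_if)
        then show ?thesis using A k1 kT fin T1 by auto
      qed
      ultimately show ?thesis by blast
    qed
  qed
  then show "finite (set_pmf (update k l (i, \<Delta>) (T, c)))"
    and "((T1, c1), t) \<in> set_pmf (update k l (i, \<Delta>) (T, c)) \<Longrightarrow> finite T1 \<and> card T1 \<le> k \<and> card T1 \<le> card T + 1"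
    by blast+
qed

lemma run_bound:
  fixes lam a :: real
  assumes k1: "1 \<le> k" and l1: "1 \<le> l" and lk: "l \<le> k" and lam: "0 \<le> lam" and a: "9 \<le> a"
    and H: "k \<le> N \<Longrightarrow> exp (lam * 9) + (7/8) ^ l * exp (lam * (9 + real k + real l)) \<le> exp (lam * a)"
  shows "finite T \<Longrightarrow> card T \<le> k \<Longrightarrow> card T + length xs \<le> N \<Longrightarrow>
    finite (set_pmf (run k l xs (T, c))) \<and>
    measure_pmf.expectation (run k l xs (T, c)) (\<lambda>(s, t). exp (lam * real t))
      \<le> exp (lam * (a * real (length xs) + 8 * real (card T)))"
proof (induction xs arbitrary: T c)
  case Nil
  then show ?case using lam by simp
next
  case (Cons u us)
  obtain i \<Delta> where u: "u = (i, \<Delta>)" by fastforce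
  let ?U = "update k l (i, \<Delta>) (T, c)"
  have finU: "finite (set_pmf ?U)" using update_support(1)[OF Cons.prems(1,2) k1 l1] .
  have inv: "finite T1 \<and> card T1 \<le> k \<and> card T1 + length us \<le> N" if "((T1, c1), t) \<in> set_pmf ?U" for T1 c1 t
    using update_support(2)[OF Cons.prems(1,2) k1 l1 that] Cons.prems(3) by auto
  define f where "f = (\<lambda>(s1, c1). map_pmf (\<lambda>(s2, c2). (s2, c1 + c2)) (run k l us s1))"
  have run_eq: "run k l (u # us) (T, c) = bind_pmf ?U f" unfolding u f_def by simp
  have finf: "finite (set_pmf (f x))" if "x \<in> set_pmf ?U" for x
  proof -
    obtain T1 c1 t where x: "x = ((T1, c1), t)" by (metis prod.collapse)
    show ?thesis using Cons.IH[of T1 c1] inv[of T1 c1 t] that unfolding x f_def by auto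
  qed
  have fin: "finite (set_pmf (run k l (u # us) (T, c)))"
    unfolding run_eq using finU finf by auto
  define g where "g = (\<lambda>((T1::nat set, c1::nat \<Rightarrow> real), t::nat). exp (lam * (real t + 8 * real (card T1))) * exp (lam * a * real (length us)))"
  have "measure_pmf.expectation (bind_pmf ?U f) (\<lambda>(s, t). exp (lam * real t)) \<le> measure_pmf.expectation ?U g"
  proof (rule E_bind_le[OF finU finf])
    fix x assume xU: "x \<in> set_pmf ?U"
    obtain T1 c1 t where x: "x = ((T1, c1), t)" by (metis prod.collapse)
    have IH: "measure_pmf.expectation (run k l us (T1, c1)) (\<lambda>(s, t). exp (lam * real t))
      \<le> exp (lam * (a * real (length us) + 8 * real (card T1)))"
      using Cons.IH[of T1 c1] inv[of T1 c1 t] xU unfolding x by auto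
    have "measure_pmf.expectation (f x) (\<lambda>(s, t). exp (lam * real t)) =
      measure_pmf.expectation (run k l us (T1, c1)) (\<lambda>(s, t2). exp (lam * real t) * exp (lam * real t2))"
      unfolding x f_def by (simp add: case_prod_beta exp_add[symmetric] algebra_simps, intro Bochner_Integration.integral_cong refl) (simp add: algebra_simps split: prod.split)
    also have "\<dots> = exp (lam * real t) * measure_pmf.expectation (run k l us (T1, c1)) (\<lambda>(s, t2). exp (lam * real t2))"
      unfolding case_prod_beta by (rule integral_mult_right_zero)
    also have "\<dots> \<le> exp (lam * real t) * exp (lam * (a * real (length us) + 8 * real (card T1)))"
      using IH by (intro mult_left_mono) auto
    also have "\<dots> = g x" unfolding g_def x by (simp add: exp_add[symmetric] algebra_simps)
    finally show "measure_pmf.expectation (f x) (\<lambda>(s, t). exp (lam * real t)) \<le> g x" .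
  qed
  also have "measure_pmf.expectation ?U g = measure_pmf.expectation ?U
      (\<lambda>((T1, c1), t). exp (lam * (real t + 8 * real (card T1)))) * exp (lam * a * real (length us))"
    unfolding g_def case_prod_beta by (rule integral_mult_left_zero)
  also have "\<dots> \<le> exp (lam * (a + 8 * real (card T))) * exp (lam * a * real (length us))"
  proof (intro mult_right_mono update_step[OF Cons.prems(1,2) l1 lk lam a])
    assume "card T = k"
    then show "exp (lam * 9) + (7/8) ^ l * exp (lam * (9 + real k + real l)) \<le> exp (lam * a)"
      using H Cons.prems(3) by simp
  qed simp
  also have "\<dots> = exp (lam * (a * real (length (u # us)) + 8 * real (card T)))"
    by (simp add: exp_add[symmetric] algebra_simps)
  finally have E: "measure_pmf.expectation (bind_pmf ?U f) (\<lambda>(s, t). exp (lam * real t))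
     \<le> exp (lam * (a * real (length (u # us)) + 8 * real (card T)))" .
  show ?case unfolding run_eq using fin[unfolded run_eq] E by blast
qed

lemma exp_small: "exp (1/32::real) \<le> 16/15"
proof -
  have "exp (1/32::real) \<le> 1 + 1/32 + (1/32)\<^sup>2" by (rule exp_bound) auto
  then show ?thesis by (simp add: power2_eq_square)
qed

lemma pow_small:
  assumes n: "1 \<le> n" and L: "15 * ln (real n) \<le> real L"
  shows "(14/15::real) ^ L \<le> 1 / real n"
proof -
  have "ln (14/15::real) \<le> 14/15 - 1" by (rule ln_le_minus_one) auto
  have "(14/15::real) ^ L = exp (real L * ln (14/15))"
    by (simp add: exp_of_nat_mult)
  also have "\<dots> \<le> exp (- ln (real n))"
  proof -
    have "real L * ln (14/15) \<le> real L * (-1/15)"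
      using \<open>ln (14/15::real) \<le> 14/15 - 1\<close> by (intro mult_left_mono) auto
    then show ?thesis using L by simp
  qed
  also have "\<dots> = 1 / real n" using n by (simp add: exp_minus inverse_eq_divide)
  finally show ?thesis .
qed

theorem theorem7:
  shows "\<exists>(l :: nat \<Rightarrow> nat \<Rightarrow> nat) (c :: real) (C :: real).
     (\<forall>n k. 1 \<le> l n k \<and> real (l n k) \<le> c * (ln (real n) + 1)) \<and>
     (\<forall>(n :: nat) (k :: nat) (m :: nat) (xs :: (nat \<times> real) list).
        1 \<le> k \<longrightarrow> 1 \<le> n \<longrightarrow> length xs = n \<longrightarrow>
        (\<forall>(i, \<Delta>) \<in> set xs. i \<in> {1..m} \<and> \<Delta> > 0) \<longrightarrow>
        measure_pmf.prob (total_cost k (l n k) xs) {t. real t \<le> C * real n}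
          \<ge> 1 - 1 / real n)"
proof -
  define L :: "nat \<Rightarrow> nat" where "L = (\<lambda>n. nat \<lceil>15 * (ln (real n) + 1)\<rceil>)"
  define l :: "nat \<Rightarrow> nat \<Rightarrow> nat" where "l = (\<lambda>n k. max 1 (min k (L n)))"
  have lnp: "0 \<le> ln (real n)" for n :: nat by (cases n) auto
  have Lr: "real (L n) = real_of_int \<lceil>15 * (ln (real n) + 1)\<rceil>" for n
  proof -
    have "0 \<le> \<lceil>15 * (ln (real n) + 1)\<rceil>" using lnp[of n] by simp
    then show ?thesis unfolding L_def by simp
  qed
  have Lge: "15 * ln (real n) + 15 \<le> real (L n)" for n
    unfolding Lr using le_of_int_ceiling[of "15 * (ln (real n) + 1)"] by simp
  have Lle: "real (L n) \<le> 15 * (ln (real n) + 1) + 1" for n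
    unfolding Lr using of_int_ceiling_le_add_one[of "15 * (ln (real n) + 1)"] by simp
  have part1: "\<forall>n k. 1 \<le> l n k \<and> real (l n k) \<le> 16 * (ln (real n) + 1)"
  proof (intro allI conjI)
    fix n k
    show "1 \<le> l n k" unfolding l_def by simp
    have "real (l n k) \<le> max 1 (real (L n))" unfolding l_def by simp
    also have "\<dots> \<le> 16 * (ln (real n) + 1)" using Lle[of n] lnp[of n] by simp
    finally show "real (l n k) \<le> 16 * (ln (real n) + 1)" .
  qed
  have part2: "measure_pmf.prob (total_cost k (l n k) xs) {t. real t \<le> 137 * real n} \<ge> 1 - 1 / real n"
    if k1: "1 \<le> k" and n1: "1 \<le> n" and len: "length xs = n" for n k xs
  proof -
    define ll where "ll = l n k"
    have l1: "1 \<le> ll" and lk: "ll \<le> k" unfolding ll_def l_def using k1 by auto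
    have Lpos: "1 \<le> L n" using Lge[of n] lnp[of n] by linarith
    have lcase: "ll = k \<or> (ll = L n \<and> L n < k)" unfolding ll_def l_def using Lpos k1 by (auto simp: max_def min_def)
    define lam :: real where "lam = (if k \<le> n then real ll / (64 * real k) else 1/64)"
    have lam0: "0 < lam" unfolding lam_def using l1 k1 by auto
    have pow_le: "(14/15::real) ^ ll \<le> real ll / real k" if kn: "k \<le> n"
      using lcase
    proof
      assume "ll = k" then show ?thesis using k1 by (simp add: power_le_one)
    next
      assume a: "ll = L n \<and> L n < k"
      have "(14/15::real) ^ ll \<le> 1 / real n"
        using a Lge[of n] lnp[of n] by (intro pow_small n1) auto
      also have "\<dots> \<le> 1 / real k" using kn k1 by (simp add: frac_le)
      also have "\<dots> \<le> real ll / real k" using l1 k1 by (simp add: divide_right_mono)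
      finally show ?thesis .
    qed
    have H: "exp (lam * 9) + (7/8) ^ ll * exp (lam * (9 + real k + real ll)) \<le> exp (lam * 73)"
      if kn: "k \<le> n"
    proof -
      have lamd: "lam = real ll / (64 * real k)" using kn unfolding lam_def by simp
      have "lam * (real k + real ll) \<le> real ll / 32"
      proof -
        have "lam * (real k + real ll) \<le> lam * (2 * real k)" using lk lam0 by (intro mult_left_mono) auto
        also have "\<dots> = real ll / 32" using k1 unfolding lamd by (simp add: field_simps)
        finally show ?thesis .
      qed
      then have "exp (lam * (9 + real k + real ll)) \<le> exp (lam * 9) * exp (1/32) ^ ll"
        by (simp add: exp_add[symmetric] exp_of_nat_mult[symmetric] algebra_simps)
      then have "(7/8) ^ ll * exp (lam * (9 + real k + real ll)) \<le> (7/8) ^ ll * (exp (lam * 9) * exp (1/32) ^ ll)"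
        by (intro mult_left_mono) auto
      also have "\<dots> = exp (lam * 9) * ((7/8) * exp (1/32)) ^ ll"
        by (simp only: power_mult_distrib mult_ac)
      also have "\<dots> \<le> exp (lam * 9) * (14/15) ^ ll"
        using exp_small by (intro mult_left_mono power_mono) auto
      also have "\<dots> \<le> exp (lam * 9) * (64 * lam)"
        using pow_le[OF kn] k1 unfolding lamd by (intro mult_left_mono) (auto simp: field_simps)
      finally have "exp (lam * 9) + (7/8) ^ ll * exp (lam * (9 + real k + real ll)) \<le> exp (lam * 9) * (1 + 64 * lam)"
        by (simp add: algebra_simps)
      also have "\<dots> \<le> exp (lam * 9) * exp (64 * lam)"
        by (intro mult_left_mono) (auto simp: exp_ge_add_one_self)
      also have "\<dots> = exp (lam * 73)" by (simp add: exp_add[symmetric])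
      finally show ?thesis .
    qed
    have RB: "finite (set_pmf (run k ll xs ({}, \<lambda>_. 0))) \<and>
      measure_pmf.expectation (run k ll xs ({}, \<lambda>_. 0)) (\<lambda>(s, t). exp (lam * real t))
        \<le> exp (lam * (73 * real (length xs) + 8 * real (card ({}::nat set))))"
      by (rule run_bound[OF k1 l1 lk less_imp_le[OF lam0] _ H]) (use len in auto)
    have lnn: "ln (real n) \<le> real n" using ln_le_minus_one[of "real n"] n1 by simp
    have Ln: "ln (real n) \<le> 64 * lam * real n"
    proof (cases "k \<le> n")
      case False
      then show ?thesis using lnn unfolding lam_def by simp
    next
      case True
      then have e: "64 * lam * real n = real ll * real n / real k" unfolding lam_def using k1 by simp
      show ?thesis using lcase
      proof
        assume "ll = k" then have "64 * lam * real n = real n" using e k1 by simp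
        then show ?thesis using lnn by linarith
      next
        assume a: "ll = L n \<and> L n < k"
        have "real ll \<le> real ll * real n / real k"
        proof -
          have "real k * real ll \<le> real n * real ll" using True by (intro mult_right_mono) auto
          then show ?thesis using k1 by (simp add: field_simps)
        qed
        moreover have "ln (real n) \<le> real ll" using a Lge[of n] lnp[of n] by simp
        ultimately show ?thesis using e by simp
      qed
    qed
    have "measure_pmf.prob (total_cost k ll xs) {t. \<not> real t \<le> 137 * real n}
       = measure_pmf.prob (run k ll xs ({}, \<lambda>_. 0)) {x. 137 * real n < real (snd x)}"
      unfolding total_cost_def by (simp add: vimage_def not_le)
    also have "\<dots> \<le> measure_pmf.expectation (run k ll xs ({}, \<lambda>_. 0)) (\<lambda>(s, t). exp (lam * real t)) / exp (lam * (137 * real n))"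
      using RB lam0 by (intro pmf_markov) (auto simp: case_prod_beta intro!: mult_left_mono)
    also have "\<dots> \<le> exp (lam * (73 * real n)) / exp (lam * (137 * real n))"
      using RB len by (intro divide_right_mono) auto
    also have "\<dots> = exp (- (64 * lam * real n))" by (simp add: exp_diff[symmetric] algebra_simps)
    also have "\<dots> \<le> exp (- ln (real n))" using Ln by simp
    also have "\<dots> = 1 / real n" using n1 by (simp add: exp_minus inverse_eq_divide)
    finally have "measure_pmf.prob (total_cost k ll xs) {t. \<not> real t \<le> 137 * real n} \<le> 1 / real n" .
    moreover have "measure_pmf.prob (total_cost k ll xs) {t. real t \<le> 137 * real n}
      = 1 - measure_pmf.prob (total_cost k ll xs) {t. \<not> real t \<le> 137 * real n}"
      using measure_pmf.prob_compl[of "{t. real t \<le> 137 * real n}" "total_cost k ll xs"]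
      by (simp add: set_diff_eq)
    ultimately show ?thesis unfolding ll_def by simp
  qed
  show ?thesis
    by (rule exI[of _ l], rule exI[of _ 16], rule exI[of _ 137]) (use part1 part2 in auto)
qed

end
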